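(* Let $\varepsilon>0$, $\nu\in\mathcal{S}^1$, let $L\subset\mathbb{R}^2$ be a line orthogonal to $\nu$, and let $\alpha\in\{1,2,3\}$ satisfy $|\langle\hat e_\alpha,\nu^\perp\rangle|\le\tfrac12$. Then there exists a family of triangles $(T_z)_{z\in\mathbb{Z}}$ such that for every $z\in\mathbb{Z}$: $$T_z\in\mathcal{T}^+_\varepsilon(\mathbb{R}^2),\quad T_z\subset\Sigma^{\alpha,z}_\varepsilon,\quad T_z\cap L\ne\emptyset,\quad T_z\cap T_{z+1}\ne\emptyset .$$
   Context: Lattice: $\hat e_1=(1,0)$, $\hat e_2=\tfrac12(1,\sqrt3)$, $\hat e_3=\tfrac12(-1,\sqrt3)$, $\mathcal{L}=\{z_1\hat e_1+z_2\hat e_2\colon z\in\mathbb{Z}^2\}$, $\mathcal{L}^1=\{z_1(\hat e_1+\hat e_2)+z_2(\hat e_2+\hat e_3)\colon z\in\mathbb{Z}^2\}$, $\mathcal{L}^2=\mathcal{L}^1+\hat e_1$, $\mathcal{L}^3=\mathcal{L}^1+\hat e_2$. $\mathcal{T}(\mathbb{R}^2)$: closed triangles $\mathrm{conv}\{i,j,k\}$, $i,j,k\in\mathcal L$ pairwise at distance 1, labelled $i\in\mathcal{L}^1,j\in\mathcal{L}^2,k\in\mathcal{L}^3$. $\mathcal{T}^+(\mathbb{R}^2)$ is the subfamily of such triangles whose labelled vertices are positively (counterclockwise) oriented, i.e. $(j-i)\times(k-j)>0$ with $v\times w=v_1w_2-v_2w_1$ (the "upward" triangles); $\mathcal{T}^+_\varepsilon(\mathbb{R}^2)=\varepsilon\mathcal{T}^+(\mathbb{R}^2)$.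 For $w\in\mathbb{R}^2$, $w^\perp=(-w_2,w_1)$. Slices: $\Sigma^{\alpha,z}_\varepsilon=\{s\hat e_\alpha+t\hat e_\alpha^\perp\colon s\in\mathbb{R},\ t\in[\varepsilon\tfrac{\sqrt3}{2}z,\varepsilon\tfrac{\sqrt3}{2}(z+1)]\}$ for $z\in\mathbb{Z}$. *)

theory Defs
  imports "HOL-Analysis.Analysis"
begin

definition e_hat :: "nat \<Rightarrow> real \<times> real" where
  "e_hat \<alpha> = (if \<alpha> = 1 then (1, 0)
               else if \<alpha> = 2 then (1/2, sqrt 3 / 2)
               else if \<alpha> = 3 then (-1/2, sqrt 3 / 2) else (0, 0))"

definition perp :: "real \<times> real \<Rightarrow> real \<times> real" where
  "perp w = (- snd w, fst w)"

definition cross :: "real \<times> real \<Rightarrow> real \<times> real \<Rightarrow> real" where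
  "cross v w = fst v * snd w - snd v * fst w"

definition lat :: "(real \<times> real) set" where
  "lat = {of_int z1 *\<^sub>R e_hat 1 + of_int z2 *\<^sub>R e_hat 2 | z1 z2. True}"

definition lat1 :: "(real \<times> real) set" where
  "lat1 = {of_int z1 *\<^sub>R (e_hat 1 + e_hat 2) + of_int z2 *\<^sub>R (e_hat 2 + e_hat 3) | z1 z2. True}"

definition lat2 :: "(real \<times> real) set" where
  "lat2 = (\<lambda>x. x + e_hat 1) ` lat1"

definition lat3 :: "(real \<times> real) set" where
  "lat3 = (\<lambda>x. x + e_hat 2) ` lat1"

definition triangles_plus :: "(real \<times> real) set set" where
  "triangles_plus = {convex hull {i, j, k} | i j k.
      i \<in> lat1 \<and> j \<in> lat2 \<and> k \<in> lat3 \<and>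
      dist i j = 1 \<and> dist j k = 1 \<and> dist i k = 1 \<and>
      cross (j - i) (k - j) > 0}"

definition triangles_plus_eps :: "real \<Rightarrow> (real \<times> real) set set" where
  "triangles_plus_eps \<epsilon> = (\<lambda>T. (\<lambda>x. \<epsilon> *\<^sub>R x) ` T) ` triangles_plus"

definition slice :: "real \<Rightarrow> nat \<Rightarrow> int \<Rightarrow> (real \<times> real) set" where
  "slice \<epsilon> \<alpha> z = {s *\<^sub>R e_hat \<alpha> + t *\<^sub>R perp (e_hat \<alpha>) | s t.
      \<epsilon> * sqrt 3 / 2 * of_int z \<le> t \<and> t \<le> \<epsilon> * sqrt 3 / 2 * (of_int z + 1)}"

end

theory Submission
  imports Defs
begin

definition P :: "int \<Rightarrow> int \<Rightarrow> real \<times> real" where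
  "P a b = (of_int a + of_int b / 2, of_int b * sqrt 3 / 2)"

lemma s3: "sqrt 3 * sqrt 3 = (3::real)" by simp

lemma P_eq: "P a b = of_int a *\<^sub>R e_hat 1 + of_int b *\<^sub>R e_hat 2"
  by (simp add: P_def e_hat_def)

lemma lat1I: assumes "b - a = 3*q" shows "P a b \<in> lat1"
proof -
  have r: "real_of_int b = of_int a + 3 * of_int q" using assms
    by (metis add.commute diff_add_cancel of_int_add of_int_mult of_int_numeral)
  show ?thesis unfolding lat1_def
    apply (rule CollectI, rule exI[of _ "a+q"], rule exI[of _ q])
    by (simp add: P_def e_hat_def r algebra_simps)
qed

lemma lat2I: assumes "b - a + 1 = 3*q" shows "P a b \<in> lat2"
proof -
  have "P (a-1) b \<in> lat1" by (rule lat1I[of _ _ q]) (use assms in simp)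
  moreover have "P a b = P (a-1) b + e_hat 1" by (simp add: P_def e_hat_def)
  ultimately show ?thesis unfolding lat2_def by blast
qed

lemma lat3I: assumes "b - a - 1 = 3*q" shows "P a b \<in> lat3"
proof -
  have "P a (b-1) \<in> lat1" by (rule lat1I[of _ _ q]) (use assms in simp)
  moreover have "P a b = P a (b-1) + e_hat 2" by (simp add: P_def e_hat_def field_simps)
  ultimately show ?thesis unfolding lat3_def by blast
qed

lemma sh1: "P (a+1) b = P a b + (1,0)" by (simp add: P_def)
lemma sh2: "P a (b+1) = P a b + (1/2, sqrt 3/2)" by (simp add: P_def field_simps)

lemma nv: "norm ((1::real),(0::real)) = 1" "norm ((1/2::real), sqrt 3/2) = 1"
  "norm ((1/2::real), - sqrt 3/2) = 1" "norm ((-1/2::real), sqrt 3/2) = 1"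
  "norm ((-1::real),(0::real)) = 1" "norm ((-1/2::real), - sqrt 3/2) = 1"
proof -
  have "(sqrt 3 / 2)^2 = (3/4::real)" by (simp add: power_divide)
  then show "norm ((1::real),(0::real)) = 1" "norm ((1/2::real), sqrt 3/2) = 1"
  "norm ((1/2::real), - sqrt 3/2) = 1" "norm ((-1/2::real), sqrt 3/2) = 1"
  "norm ((-1::real),(0::real)) = 1" "norm ((-1/2::real), - sqrt 3/2) = 1"
    by (simp_all add: norm_Pair power_divide)
qed

lemma dd: "dist (x::real\<times>real) (x + v) = norm v" "dist (x + v) x = norm v"
  "dist (x + v) (x + w) = norm (v - w)"
  by (simp_all add: dist_norm norm_minus_commute)

lemma d1: "dist (P a b) (P (a+1) b) = 1" "dist (P (a+1) b) (P a b) = 1"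
  by (simp_all only: sh1 dd nv)
lemma d2: "dist (P a b) (P a (b+1)) = 1" "dist (P a (b+1)) (P a b) = 1"
  by (simp_all only: sh2 dd nv)
lemma d3: "dist (P (a+1) b) (P a (b+1)) = 1" "dist (P a (b+1)) (P (a+1) b) = 1"
proof -
  have "((1::real),(0::real)) - (1/2, sqrt 3/2) = (1/2, - sqrt 3/2)"
       "(1/2, sqrt 3/2) - ((1::real),(0::real)) = (-1/2, sqrt 3/2)" by simp_all
  then show "dist (P (a+1) b) (P a (b+1)) = 1" "dist (P a (b+1)) (P (a+1) b) = 1"
    by (simp_all only: sh1 sh2 dd nv)
qed

lemma c1: "cross (P (a+1) b - P a b) (P a (b+1) - P (a+1) b) > 0"
  "cross (P a (b+1) - P (a+1) b) (P a b - P a (b+1)) > 0"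
  "cross (P a b - P a (b+1)) (P (a+1) b - P a b) > 0"
  by (simp_all add: sh1 sh2 cross_def)

lemma tri: "convex hull {P a b, P (a+1) b, P a (b+1)} \<in> triangles_plus"
proof -
  define q where "q = (b - a) div 3"
  define r where "r = (b - a) mod 3"
  have br: "b - a = 3*q + r" "0 \<le> r" "r < 3" unfolding q_def r_def by auto
  then consider "r = 0" | "r = 1" | "r = 2" by linarith
  then show ?thesis
  proof cases
    case 1
    have "P a b \<in> lat1" by (rule lat1I[of _ _ q]) (use br 1 in simp)
    moreover have "P (a+1) b \<in> lat2" by (rule lat2I[of _ _ q]) (use br 1 in simp)
    moreover have "P a (b+1) \<in> lat3" by (rule lat3I[of _ _ q]) (use br 1 in simp)
    ultimately show ?thesis unfolding triangles_plus_def using d1 d2 d3 c1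
      by (intro CollectI exI[of _ "P a b"] exI[of _ "P (a+1) b"] exI[of _ "P a (b+1)"]) simp
  next
    case 2
    have "P (a+1) b \<in> lat1" by (rule lat1I[of _ _ q]) (use br 2 in simp)
    moreover have "P a (b+1) \<in> lat2" by (rule lat2I[of _ _ "q+1"]) (use br 2 in simp)
    moreover have "P a b \<in> lat3" by (rule lat3I[of _ _ q]) (use br 2 in simp)
    moreover have "{P a b, P (a+1) b, P a (b+1)} = {P (a+1) b, P a (b+1), P a b}" by auto
    ultimately show ?thesis unfolding triangles_plus_def using d1 d2 d3 c1
      by (intro CollectI exI[of _ "P (a+1) b"] exI[of _ "P a (b+1)"] exI[of _ "P a b"]) simp
  next
    case 3
    have "P a (b+1) \<in> lat1" by (rule lat1I[of _ _ "q+1"]) (use br 3 in simp)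
    moreover have "P a b \<in> lat2" by (rule lat2I[of _ _ "q+1"]) (use br 3 in simp)
    moreover have "P (a+1) b \<in> lat3" by (rule lat3I[of _ _ q]) (use br 3 in simp)
    moreover have "{P a b, P (a+1) b, P a (b+1)} = {P a (b+1), P a b, P (a+1) b}" by auto
    ultimately show ?thesis unfolding triangles_plus_def using d1 d2 d3 c1
      by (intro CollectI exI[of _ "P a (b+1)"] exI[of _ "P a b"] exI[of _ "P (a+1) b"]) simp
  qed
qed


lemma unit_e: "k \<in> {1,2,3} \<Longrightarrow> fst (e_hat k)^2 + snd (e_hat k)^2 = 1"
proof -
  have "(sqrt 3 / 2)^2 = (3/4::real)" by (simp add: power_divide)
  then show "k \<in> {1,2,3} \<Longrightarrow> fst (e_hat k)^2 + snd (e_hat k)^2 = 1"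
    by (auto simp: e_hat_def power_divide)
qed

lemma decomp: assumes "fst u^2 + snd u^2 = 1"
  shows "x = inner x u *\<^sub>R u + inner x (perp u) *\<^sub>R perp u"
proof -
  obtain x1 x2 u1 u2 where xu: "x = (x1,x2)" "u = (u1,u2)" by (cases x, cases u) auto
  have "u1^2 + u2^2 = 1" using assms xu by simp
  have e1: "(x1*u1+x2*u2)*u1 + (x2*u1 - x1*u2)*(-u2) = x1*(u1^2+u2^2)"
    by (simp add: algebra_simps power2_eq_square)
  have e2: "(x1*u1+x2*u2)*u2 + (x2*u1 - x1*u2)*u1 = x2*(u1^2+u2^2)"
    by (simp add: algebra_simps power2_eq_square)
  have "x1 = (x1*u1+x2*u2)*u1 + (x2*u1 - x1*u2)*(-u2)" "x2 = (x1*u1+x2*u2)*u2 + (x2*u1 - x1*u2)*u1"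
    using e1 e2 \<open>u1^2 + u2^2 = 1\<close> by simp_all
  then show ?thesis using xu by (simp add: perp_def algebra_simps)
qed

lemma slice_mem: assumes "k \<in> {1,2,3}"
  "\<epsilon> * sqrt 3 / 2 * of_int z \<le> inner x (perp (e_hat k))"
  "inner x (perp (e_hat k)) \<le> \<epsilon> * sqrt 3 / 2 * (of_int z + 1)"
  shows "x \<in> slice \<epsilon> k z"
  unfolding slice_def using assms decomp[OF unit_e[OF assms(1)], of x] by blast

lemma seg: assumes "fst u^2 + snd u^2 = 1" "inner A (perp u) = \<tau>"
  "0 \<le> \<sigma> - inner A u" "\<sigma> - inner A u \<le> 1"
  shows "\<sigma> *\<^sub>R u + \<tau> *\<^sub>R perp u \<in> closed_segment A (A + u)"
proof -
  define l where "l = \<sigma> - inner A u"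
  have "\<sigma> *\<^sub>R u + \<tau> *\<^sub>R perp u = l *\<^sub>R u + (inner A u *\<^sub>R u + inner A (perp u) *\<^sub>R perp u)"
    using assms(2) by (simp add: l_def algebra_simps)
  also have "\<dots> = (1 - l) *\<^sub>R A + l *\<^sub>R (A + u)"
    using decomp[OF assms(1), of A, symmetric] by (simp add: algebra_simps)
  finally show ?thesis unfolding in_segment using assms l_def by blast
qed

lemma seg_hull: "closed_segment A B \<subseteq> convex hull {A, B, C}"
  "closed_segment A C \<subseteq> convex hull {A, B, C}"
  "closed_segment B C \<subseteq> convex hull {A, B, C}"
  by (simp_all add: segment_convex_hull hull_mono)

lemma hull_strip: assumes "lo \<le> inner A w" "inner A w \<le> hi" "lo \<le> inner B w" "inner B w \<le> hi"
  "lo \<le> inner C w" "inner C w \<le> hi"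
  shows "convex hull {A,B,C} \<subseteq> {y. lo \<le> inner y w \<and> inner y w \<le> hi}"
proof (rule hull_minimal)
  show "{A,B,C} \<subseteq> {y. lo \<le> inner y w \<and> inner y w \<le> hi}" using assms by auto
  have "{y. lo \<le> inner y w \<and> inner y w \<le> hi} = {y. inner w y \<ge> lo} \<inter> {y. inner w y \<le> hi}"
    by (auto simp: inner_commute)
  then show "convex {y. lo \<le> inner y w \<and> inner y w \<le> hi}"
    using convex_Int convex_halfspace_ge convex_halfspace_le by metis
qed

lemma floor_dn: assumes "x - 1 \<le> x'" "x' \<le> x"
  shows "\<lfloor>x'\<rfloor> = \<lfloor>x\<rfloor> \<or> \<lfloor>x'\<rfloor> = \<lfloor>x\<rfloor> - 1"
proof -
  have "\<lfloor>x'\<rfloor> \<le> \<lfloor>x\<rfloor>" using assms by (simp add: floor_mono)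
  moreover have "\<lfloor>x - 1\<rfloor> \<le> \<lfloor>x'\<rfloor>" by (rule floor_mono) (use assms in simp)
  moreover have "\<lfloor>x - 1\<rfloor> = \<lfloor>x\<rfloor> - 1" by simp
  ultimately show ?thesis by linarith
qed

lemma assemble:
  fixes V :: "int \<Rightarrow> (real\<times>real) set"
  assumes "\<epsilon> > 0" "k \<in> {1,2,3}"
    "\<And>z. V z \<in> triangles_plus"
    "\<And>z. V z \<subseteq> {y. sqrt 3 / 2 * of_int z \<le> inner y (perp (e_hat k)) \<and> inner y (perp (e_hat k)) \<le> sqrt 3 / 2 * (of_int z + 1)}"
    "\<And>z. \<exists>p\<in>V z. \<epsilon> *\<^sub>R p \<in> L"
    "\<And>z. V z \<inter> V (z+1) \<noteq> {}"
  shows "\<exists>T :: int \<Rightarrow> (real \<times> real) set. \<forall>z. T z \<in> triangles_plus_eps \<epsilon> \<and>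
           T z \<subseteq> slice \<epsilon> k z \<and> T z \<inter> L \<noteq> {} \<and> T z \<inter> T (z + 1) \<noteq> {}"
proof (intro exI[of _ "\<lambda>z. (\<lambda>x. \<epsilon> *\<^sub>R x) ` V z"] allI conjI)
  fix z
  show "(\<lambda>x. \<epsilon> *\<^sub>R x) ` V z \<in> triangles_plus_eps \<epsilon>"
    unfolding triangles_plus_eps_def using assms(3) by blast
  show "(\<lambda>x. \<epsilon> *\<^sub>R x) ` V z \<subseteq> slice \<epsilon> k z"
  proof
    fix x assume "x \<in> (\<lambda>x. \<epsilon> *\<^sub>R x) ` V z"
    then obtain y where y: "y \<in> V z" "x = \<epsilon> *\<^sub>R y" by blast
    have b: "sqrt 3 / 2 * of_int z \<le> inner y (perp (e_hat k))" "inner y (perp (e_hat k)) \<le> sqrt 3 / 2 * (of_int z + 1)"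
      using assms(4)[of z] y(1) by auto
    have "\<epsilon> * (sqrt 3 / 2 * of_int z) \<le> \<epsilon> * inner y (perp (e_hat k))"
         "\<epsilon> * inner y (perp (e_hat k)) \<le> \<epsilon> * (sqrt 3 / 2 * (of_int z + 1))"
      using b assms(1) by (simp_all add: mult_left_mono)
    then show "x \<in> slice \<epsilon> k z" using y(2) assms(2)
      by (intro slice_mem) (simp_all add: algebra_simps)
  qed
  show "(\<lambda>x. \<epsilon> *\<^sub>R x) ` V z \<inter> L \<noteq> {}" using assms(5)[of z] by blast
  show "(\<lambda>x. \<epsilon> *\<^sub>R x) ` V z \<inter> (\<lambda>x. \<epsilon> *\<^sub>R x) ` V (z + 1) \<noteq> {}" using assms(6)[of z] by blast
qed


lemma onL: assumes "\<epsilon> > 0" "inner u \<nu> \<noteq> 0"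
  shows "inner (\<epsilon> *\<^sub>R ((c/(\<epsilon> * inner u \<nu>) - n * (sqrt 3 / 2 * inner w \<nu> / inner u \<nu>)) *\<^sub>R u + (n * (sqrt 3 / 2)) *\<^sub>R w)) \<nu> = c"
  using assms by (simp add: inner_add_left field_simps)

lemma ip1: "inner (P a b) (perp (e_hat 1)) = of_int b * (sqrt 3 / 2)"
  "inner (P a b) (e_hat 1) = of_int a + of_int b / 2"
  by (simp_all add: P_def e_hat_def perp_def)
lemma ip1': "inner (P a b) (perp (e_hat (Suc 0))) = of_int b * (sqrt 3 / 2)"
  by (simp_all add: P_def e_hat_def perp_def)
lemma ip2: "inner (P a b) (perp (e_hat 2)) = - of_int a * (sqrt 3 / 2)"
  "inner (P a b) (e_hat 2) = of_int a / 2 + of_int b"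
  by (simp_all add: P_def e_hat_def perp_def field_simps)
lemma ip3: "inner (P a b) (perp (e_hat 3)) = - (of_int a + of_int b) * (sqrt 3 / 2)"
  "inner (P a b) (e_hat 3) = (of_int b - of_int a) / 2"
  by (simp_all add: P_def e_hat_def perp_def field_simps)

lemma case1:
  assumes "\<epsilon> > 0" "L = {x. inner x \<nu> = c}" "inner (e_hat 1) \<nu> \<noteq> 0"
    "\<bar>sqrt 3 / 2 * inner (perp (e_hat 1)) \<nu> / inner (e_hat 1) \<nu>\<bar> \<le> 1/2"
  shows "\<exists>T :: int \<Rightarrow> (real \<times> real) set. \<forall>z. T z \<in> triangles_plus_eps \<epsilon> \<and>
           T z \<subseteq> slice \<epsilon> 1 z \<and> T z \<inter> L \<noteq> {} \<and> T z \<inter> T (z + 1) \<noteq> {}"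
proof -
  define u where "u = e_hat 1"
  define w where "w = perp u"
  define d where "d = sqrt 3 / 2 * inner w \<nu> / inner u \<nu>"
  define g where "g n = c/(\<epsilon> * inner u \<nu>) - n * d" for n
  define m where "m z = \<lfloor>g (of_int z) - of_int z / 2\<rfloor>" for z :: int
  define V where "V z = convex hull {P (m z) z, P (m z + 1) z, P (m z) (z+1)}" for z
  have uu: "fst u^2 + snd u^2 = 1" unfolding u_def by (rule unit_e) simp
  have hd: "\<bar>d\<bar> \<le> 1/2" using assms(4) unfolding d_def w_def u_def .
  show ?thesis
  proof (rule assemble[where V=V])
    show "\<epsilon> > 0" "(1::nat) \<in> {1,2,3}" using assms by auto
    fix z
    show "V z \<in> triangles_plus" unfolding V_def by (rule tri)
    show "V z \<subseteq> {y. sqrt 3 / 2 * of_int z \<le> inner y (perp (e_hat 1)) \<and> inner y (perp (e_hat 1)) \<le> sqrt 3 / 2 * (of_int z + 1)}"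
      unfolding V_def by (rule hull_strip) (simp_all add: ip1 ip1')
    define p where "p = g (of_int z) *\<^sub>R u + (of_int z * (sqrt 3 / 2)) *\<^sub>R w"
    have "p \<in> closed_segment (P (m z) z) (P (m z) z + u)"
      unfolding p_def w_def
    proof (rule seg[OF uu])
      show "inner (P (m z) z) (perp u) = of_int z * (sqrt 3 / 2)" by (simp add: u_def ip1 ip1')
      show "0 \<le> g (of_int z) - inner (P (m z) z) u" "g (of_int z) - inner (P (m z) z) u \<le> 1"
        unfolding u_def ip1 m_def by linarith+
    qed
    moreover have "P (m z) z + u = P (m z + 1) z" by (simp add: sh1 u_def e_hat_def)
    ultimately have "p \<in> V z" unfolding V_def using seg_hull(1) by (metis subsetD)
    moreover have "\<epsilon> *\<^sub>R p \<in> L" unfolding assms(2) p_def g_def d_def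
      using onL[OF assms(1), of u \<nu>] assms(3) u_def by simp
    ultimately show "\<exists>p\<in>V z. \<epsilon> *\<^sub>R p \<in> L" by blast
    have xx: "g (of_int (z+1)) - of_int (z+1) / 2 = g (of_int z) - of_int z / 2 - d - 1/2"
      by (simp add: g_def algebra_simps)
    have hd': "-1/2 \<le> d" "d \<le> 1/2" using hd by auto
    have "m (z+1) = m z \<or> m (z+1) = m z - 1" unfolding m_def xx
      by (rule floor_dn) (use hd' in linarith)+
    then show "V z \<inter> V (z+1) \<noteq> {}"
    proof
      assume h: "m (z+1) = m z"
      have "P (m z) (z+1) \<in> V z" "P (m z) (z+1) \<in> V (z+1)" unfolding V_def h
        by (simp_all add: hull_inc)
      then show ?thesis by blast
    next
      assume h: "m (z+1) = m z - 1"
      have "P (m z) (z+1) \<in> V z" "P (m z) (z+1) \<in> V (z+1)" unfolding V_def h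
        by (simp_all add: hull_inc)
      then show ?thesis by blast
    qed
  qed
qed


lemma case3:
  assumes "\<epsilon> > 0" "L = {x. inner x \<nu> = c}" "inner (e_hat 3) \<nu> \<noteq> 0"
    "\<bar>sqrt 3 / 2 * inner (perp (e_hat 3)) \<nu> / inner (e_hat 3) \<nu>\<bar> \<le> 1/2"
  shows "\<exists>T :: int \<Rightarrow> (real \<times> real) set. \<forall>z. T z \<in> triangles_plus_eps \<epsilon> \<and>
           T z \<subseteq> slice \<epsilon> 3 z \<and> T z \<inter> L \<noteq> {} \<and> T z \<inter> T (z + 1) \<noteq> {}"
proof -
  define u where "u = e_hat 3"
  define w where "w = perp u"
  define d where "d = sqrt 3 / 2 * inner w \<nu> / inner u \<nu>"
  define g where "g n = c/(\<epsilon> * inner u \<nu>) - n * d" for n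
  define m where "m z = \<lfloor>g (of_int z) - of_int z / 2\<rfloor>" for z :: int
  define V where "V z = convex hull {P (-z-1-m z) (m z), P (-z-1-m z + 1) (m z), P (-z-1-m z) (m z + 1)}" for z
  have uu: "fst u^2 + snd u^2 = 1" unfolding u_def by (rule unit_e) simp
  have hd: "\<bar>d\<bar> \<le> 1/2" using assms(4) unfolding d_def w_def u_def .
  show ?thesis
  proof (rule assemble[where V=V])
    show "\<epsilon> > 0" "(3::nat) \<in> {1,2,3}" using assms by auto
    fix z
    show "V z \<in> triangles_plus" unfolding V_def by (rule tri)
    show "V z \<subseteq> {y. sqrt 3 / 2 * of_int z \<le> inner y (perp (e_hat 3)) \<and> inner y (perp (e_hat 3)) \<le> sqrt 3 / 2 * (of_int z + 1)}"
      unfolding V_def by (rule hull_strip) (simp_all add: ip3 algebra_simps)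
    define p where "p = g (of_int z) *\<^sub>R u + (of_int z * (sqrt 3 / 2)) *\<^sub>R w"
    have "p \<in> closed_segment (P (-z-1-m z + 1) (m z)) (P (-z-1-m z + 1) (m z) + u)"
      unfolding p_def w_def
    proof (rule seg[OF uu])
      show "inner (P (-z-1-m z + 1) (m z)) (perp u) = of_int z * (sqrt 3 / 2)" by (simp add: u_def ip3 algebra_simps)
      have i: "inner (P (-z-1-m z + 1) (m z)) u = of_int (m z) + of_int z / 2" by (simp add: u_def ip3 field_simps)
      have fl: "of_int (m z) \<le> g (of_int z) - of_int z / 2" "g (of_int z) - of_int z / 2 < of_int (m z) + 1"
        unfolding m_def using floor_correct[of "g (of_int z) - of_int z / 2"] by simp_all
      show "0 \<le> g (of_int z) - inner (P (-z-1-m z + 1) (m z)) u" "g (of_int z) - inner (P (-z-1-m z + 1) (m z)) u \<le> 1"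
        unfolding i using fl by linarith+
    qed
    moreover have "P (-z-1-m z + 1) (m z) + u = P (-z-1-m z) (m z + 1)" by (simp add: P_def u_def e_hat_def field_simps)
    ultimately have "p \<in> V z" unfolding V_def using seg_hull(3) by (metis subsetD)
    moreover have "\<epsilon> *\<^sub>R p \<in> L" unfolding assms(2) p_def g_def d_def
      using onL[OF assms(1), of u \<nu>] assms(3) u_def by simp
    ultimately show "\<exists>p\<in>V z. \<epsilon> *\<^sub>R p \<in> L" by blast
    have xx: "g (of_int (z+1)) - of_int (z+1) / 2 = g (of_int z) - of_int z / 2 - d - 1/2"
      by (simp add: g_def algebra_simps)
    have hd': "-1/2 \<le> d" "d \<le> 1/2" using hd by auto
    have "m (z+1) = m z \<or> m (z+1) = m z - 1" unfolding m_def xx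
      by (rule floor_dn) (use hd' in linarith)+
    then show "V z \<inter> V (z+1) \<noteq> {}"
    proof
      assume h: "m (z+1) = m z"
      have e: "-(z+1)-1-m z + 1 = -z-1-m z" by simp
      have "P (-z-1-m z) (m z) \<in> V z" "P (-z-1-m z) (m z) \<in> V (z+1)" unfolding V_def h e
        by (simp_all add: hull_inc)
      then show ?thesis by blast
    next
      assume h: "m (z+1) = m z - 1"
      have e: "-(z+1)-1-(m z - 1) = -z-1-m z" "m z - 1 + 1 = m z" by simp_all
      have "P (-z-1-m z) (m z) \<in> V z" "P (-z-1-m z) (m z) \<in> V (z+1)" unfolding V_def h e
        by (simp_all add: hull_inc)
      then show ?thesis by blast
    qed
  qed
qed

lemma case2:
  assumes "\<epsilon> > 0" "L = {x. inner x \<nu> = c}" "inner (e_hat 2) \<nu> \<noteq> 0"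
    "\<bar>sqrt 3 / 2 * inner (perp (e_hat 2)) \<nu> / inner (e_hat 2) \<nu>\<bar> \<le> 1/2"
  shows "\<exists>T :: int \<Rightarrow> (real \<times> real) set. \<forall>z. T z \<in> triangles_plus_eps \<epsilon> \<and>
           T z \<subseteq> slice \<epsilon> 2 z \<and> T z \<inter> L \<noteq> {} \<and> T z \<inter> T (z + 1) \<noteq> {}"
proof -
  define u where "u = e_hat 2"
  define w where "w = perp u"
  define d where "d = sqrt 3 / 2 * inner w \<nu> / inner u \<nu>"
  define g where "g n = c/(\<epsilon> * inner u \<nu>) - n * d" for n
  define m where "m z = \<lfloor>g (of_int z + 1) + (of_int z + 1) / 2\<rfloor>" for z :: int
  define V where "V z = convex hull {P (-z-1) (m z), P (-z-1 + 1) (m z), P (-z-1) (m z + 1)}" for z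
  have uu: "fst u^2 + snd u^2 = 1" unfolding u_def by (rule unit_e) simp
  have hd: "\<bar>d\<bar> \<le> 1/2" using assms(4) unfolding d_def w_def u_def .
  show ?thesis
  proof (rule assemble[where V=V])
    show "\<epsilon> > 0" "(2::nat) \<in> {1,2,3}" using assms by auto
    fix z
    show "V z \<in> triangles_plus" unfolding V_def by (rule tri)
    show "V z \<subseteq> {y. sqrt 3 / 2 * of_int z \<le> inner y (perp (e_hat 2)) \<and> inner y (perp (e_hat 2)) \<le> sqrt 3 / 2 * (of_int z + 1)}"
      unfolding V_def by (rule hull_strip) (simp_all add: ip2 algebra_simps)
    define p where "p = g (of_int z + 1) *\<^sub>R u + ((of_int z + 1) * (sqrt 3 / 2)) *\<^sub>R w"
    have "p \<in> closed_segment (P (-z-1) (m z)) (P (-z-1) (m z) + u)"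
      unfolding p_def w_def
    proof (rule seg[OF uu])
      show "inner (P (-z-1) (m z)) (perp u) = (of_int z + 1) * (sqrt 3 / 2)" by (simp add: u_def ip2 algebra_simps)
      have i: "inner (P (-z-1) (m z)) u = of_int (m z) - (of_int z + 1) / 2" by (simp add: u_def ip2 field_simps)
      have fl: "of_int (m z) \<le> g (of_int z + 1) + (of_int z + 1) / 2" "g (of_int z + 1) + (of_int z + 1) / 2 < of_int (m z) + 1"
        unfolding m_def using floor_correct[of "g (of_int z + 1) + (of_int z + 1) / 2"] by simp_all
      show "0 \<le> g (of_int z + 1) - inner (P (-z-1) (m z)) u" "g (of_int z + 1) - inner (P (-z-1) (m z)) u \<le> 1"
        unfolding i using fl by linarith+
    qed
    moreover have "P (-z-1) (m z) + u = P (-z-1) (m z + 1)" by (simp add: sh2 u_def e_hat_def)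
    ultimately have "p \<in> V z" unfolding V_def using seg_hull(2) by (metis subsetD)
    moreover have "\<epsilon> *\<^sub>R p \<in> L" unfolding assms(2) p_def g_def d_def
      using onL[OF assms(1), of u \<nu>] assms(3) u_def by simp
    ultimately show "\<exists>p\<in>V z. \<epsilon> *\<^sub>R p \<in> L" by blast
    have xx: "g (of_int (z+1) + 1) + (of_int (z+1) + 1) / 2 = g (of_int z + 1) + (of_int z + 1) / 2 - d + 1/2"
      by (simp add: g_def algebra_simps)
    have hd': "-1/2 \<le> d" "d \<le> 1/2" using hd by auto
    have "m z = m (z+1) \<or> m z = m (z+1) - 1" unfolding m_def xx
      by (rule floor_dn) (use hd' in linarith)+
    then show "V z \<inter> V (z+1) \<noteq> {}"
    proof
      assume h: "m z = m (z+1)"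
      have e: "-(z+1)-1+1 = -z-1" by simp
      have "P (-z-1) (m (z+1)) \<in> V z" "P (-z-1) (m (z+1)) \<in> V (z+1)" unfolding V_def h e
        by (simp_all add: hull_inc)
      then show ?thesis by blast
    next
      assume h: "m z = m (z+1) - 1"
      have e: "-(z+1)-1+1 = -z-1" "m (z+1) - 1 + 1 = m (z+1)" by simp_all
      have "P (-z-1) (m (z+1)) \<in> V z" "P (-z-1) (m (z+1)) \<in> V (z+1)" unfolding V_def h e
        by (simp_all add: hull_inc)
      then show ?thesis by blast
    qed
  qed
qed


lemma prep:
  assumes "k \<in> {1,2,3}" "norm \<nu> = 1" "\<bar>inner (e_hat k) (perp \<nu>)\<bar> \<le> 1/2"
  shows "inner (e_hat k) \<nu> \<noteq> 0 \<and> \<bar>sqrt 3 / 2 * inner (perp (e_hat k)) \<nu> / inner (e_hat k) \<nu>\<bar> \<le> 1/2"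
proof -
  obtain n1 n2 where nu: "\<nu> = (n1, n2)" by (cases \<nu>) auto
  obtain u1 u2 where ue: "e_hat k = (u1, u2)" by (cases "e_hat k") auto
  have n: "n1^2 + n2^2 = 1" using assms(2) nu by (simp add: norm_Pair)
  have u: "u1^2 + u2^2 = 1" using unit_e[OF assms(1)] ue by simp
  define U where "U = inner (e_hat k) \<nu>"
  define W where "W = inner (perp (e_hat k)) \<nu>"
  have Ue: "U = u1*n1 + u2*n2" unfolding U_def using nu ue by simp
  have We: "W = - inner (e_hat k) (perp \<nu>)" unfolding W_def using nu ue by (simp add: perp_def)
  have W2: "W^2 \<le> 1/4"
  proof -
    have "\<bar>W\<bar> \<le> 1/2" using We assms(3) by simp
    then have "\<bar>W\<bar>^2 \<le> (1/2)^2" by (rule power_mono) simp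
    moreover have "(1/2::real)^2 = 1/4" by (simp add: power2_eq_square)
    ultimately show ?thesis by simp
  qed
  have "U^2 + W^2 = (u1^2 + u2^2) * (n1^2 + n2^2)"
    unfolding Ue We using nu ue by (simp add: perp_def power2_eq_square algebra_simps)
  then have UW: "U^2 + W^2 = 1" using n u by simp
  then have U2: "U^2 \<ge> 3/4" using W2 by linarith
  then have U0: "U \<noteq> 0" by auto
  have s3sq: "(sqrt 3 / 2)^2 = (3/4::real)" by (simp add: power_divide)
  have "(sqrt 3 / 2 * W / U)^2 = 3/4 * W^2 / U^2"
    by (simp add: power_divide power_mult_distrib s3sq)
  also have "\<dots> \<le> (1/2)^2"
  proof -
    have Upos: "U^2 > 0" using U0 by simp
    have "3/4 * W^2 \<le> 1/4 * U^2" using U2 W2 by linarith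
    then have "3/4*W^2/U^2 \<le> 1/4" using Upos by (simp add: divide_le_eq)
    then show ?thesis by (simp add: power2_eq_square)
  qed
  finally have "\<bar>sqrt 3 / 2 * W / U\<bar> \<le> \<bar>1/2\<bar>" by (subst abs_le_square_iff) simp
  then show ?thesis using U0 unfolding U_def W_def by simp
qed

theorem lemma4p6:
  fixes \<epsilon> :: real and \<nu> :: "real \<times> real" and L :: "(real \<times> real) set" and \<alpha> :: nat
  assumes "\<epsilon> > 0"
    and "norm \<nu> = 1"
    and "\<exists>c. L = {x. inner x \<nu> = c}"
    and "\<alpha> \<in> {1, 2, 3}"
    and "\<bar>inner (e_hat \<alpha>) (perp \<nu>)\<bar> \<le> 1/2"
  shows "\<exists>T :: int \<Rightarrow> (real \<times> real) set. \<forall>z. T z \<in> triangles_plus_eps \<epsilon> \<and>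
           T z \<subseteq> slice \<epsilon> \<alpha> z \<and> T z \<inter> L \<noteq> {} \<and> T z \<inter> T (z + 1) \<noteq> {}"
proof -
  obtain c where L: "L = {x. inner x \<nu> = c}" using assms(3) by blast
  have p: "inner (e_hat \<alpha>) \<nu> \<noteq> 0" "\<bar>sqrt 3 / 2 * inner (perp (e_hat \<alpha>)) \<nu> / inner (e_hat \<alpha>) \<nu>\<bar> \<le> 1/2"
    using prep[OF assms(4) assms(2) assms(5)] by auto
  consider "\<alpha> = 1" | "\<alpha> = 2" | "\<alpha> = 3" using assms(4) by auto
  then show ?thesis
  proof cases
    case 1 then show ?thesis using case1[OF assms(1) L] p by simp
  next
    case 2 then show ?thesis using case2[OF assms(1) L] p by simp
  next
    case 3 then show ?thesis using case3[OF assms(1) L] p by simp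
  qed
qed

end
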